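(* Fix $k\ge1$. Let $H$ be the free abelian group with basis $\{h_{i_1\dots i_{2k+3}}\mid\{i_1,\dots,i_{2k+3}\}=\{1,\dots,2k+3\}\}$, and let $P$ be the subgroup of $H$ generated by all elements \[h_{i_1\dots i_{2k+3}}-\operatorname{sgn}(\sigma)\,h_{i_{\sigma(1)}\dots i_{\sigma(2k+3)}}\qquad(\sigma\in S_{2k+3})\] and \[h_{i_1\dots i_{2k}\,i_{2k+1}\,i_{2k+2}\,i_{2k+3}}+h_{i_1\dots i_{2k}\,i_{2k+2}\,i_{2k+3}\,i_{2k+1}}+h_{i_1\dots i_{2k}\,i_{2k+3}\,i_{2k+1}\,i_{2k+2}},\] where $\{i_1,\dots,i_{2k+3}\}=\{1,\dots,2k+3\}$. Then $h_{12\dots(2k+3)}\notin P$. *)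

theory Defs
  imports "HOL-Combinatorics.Permutations"
begin

text \<open>A basis element h_{i_1 ... i_n} (with {i_1,...,i_n} = {1,...,n}) is encoded by the
  bijection p of {1..n} with p j = i_j.  The free abelian group H is realised as
  integer-valued functions on such index functions; hbasis p is the basis vector h_p.\<close>

definition hbasis :: "(nat \<Rightarrow> nat) \<Rightarrow> ((nat \<Rightarrow> nat) \<Rightarrow> int)" where
  "hbasis p = (\<lambda>q. if q = p then 1 else 0)"

definition int_gen :: "(('a \<Rightarrow> int) set) \<Rightarrow> ('a \<Rightarrow> int) set" where
  "int_gen S = {(\<lambda>x. \<Sum>g\<in>T. c g * g x) | T c. finite T \<and> T \<subseteq> S}"

definition antisym_gens :: "nat \<Rightarrow> ((nat \<Rightarrow> nat) \<Rightarrow> int) set" where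
  "antisym_gens k = {(\<lambda>x. hbasis p x - sign \<sigma> * hbasis (p \<circ> \<sigma>) x) | p \<sigma>.
      p permutes {1..2*k+3} \<and> \<sigma> permutes {1..2*k+3}}"

definition jacobi_gens :: "nat \<Rightarrow> ((nat \<Rightarrow> nat) \<Rightarrow> int) set" where
  "jacobi_gens k = {(\<lambda>x. hbasis p x
      + hbasis (p(2*k+1 := p (2*k+2), 2*k+2 := p (2*k+3), 2*k+3 := p (2*k+1))) x
      + hbasis (p(2*k+1 := p (2*k+3), 2*k+2 := p (2*k+1), 2*k+3 := p (2*k+2))) x) | p.
      p permutes {1..2*k+3}}"

definition Psub :: "nat \<Rightarrow> ((nat \<Rightarrow> nat) \<Rightarrow> int) set" where
  "Psub k = int_gen (antisym_gens k \<union> jacobi_gens k)"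

end

theory Submission
  imports Defs
begin

definition phi :: "nat \<Rightarrow> ((nat \<Rightarrow> nat) \<Rightarrow> int) \<Rightarrow> int" where
  "phi k v = (\<Sum>q\<in>{q. q permutes {1..2*k+3}}. sign q * v q)"

lemma fin_perm: "finite {q. q permutes {1..2*k+3::nat}}"
  by (rule finite_permutations) simp

lemma phi_hbasis: "p permutes {1..2*k+3} \<Longrightarrow> phi k (hbasis p) = sign p"
proof -
  assume p: "p permutes {1..2*k+3}"
  have "phi k (hbasis p) = (\<Sum>q\<in>{q. q permutes {1..2*k+3}}. if q = p then sign q else 0)"
    unfolding phi_def hbasis_def by (rule sum.cong) auto
  also have "\<dots> = sign p" using p fin_perm[of k] by (simp add: sum.delta')
  finally show ?thesis .
qed

lemma phi_gen: "v \<in> int_gen S \<Longrightarrow> (\<And>g. g \<in> S \<Longrightarrow> phi k g mod 3 = 0) \<Longrightarrow> phi k v mod 3 = 0"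
proof -
  assume v: "v \<in> int_gen S" and h: "\<And>g. g \<in> S \<Longrightarrow> phi k g mod 3 = 0"
  then obtain T c where T: "finite T" "T \<subseteq> S" and vd: "v = (\<lambda>x. \<Sum>g\<in>T. c g * g x)"
    unfolding int_gen_def by blast
  have "phi k v = (\<Sum>g\<in>T. c g * phi k g)"
    unfolding vd phi_def by (simp add: sum_distrib_left sum_distrib_right mult_ac sum.swap[of _ T])
  also have "\<dots> mod 3 = 0"
  proof -
    have "\<forall>g\<in>T. 3 dvd c g * phi k g" using h T by (auto simp: mod_eq_0_iff_dvd)
    hence "3 dvd (\<Sum>g\<in>T. c g * phi k g)" by (simp add: dvd_sum)
    thus ?thesis by simp
  qed
  finally show ?thesis .
qed

lemma perm_cyc:
  assumes p: "p permutes S" and fS: "finite S" and "a \<in> S" "b \<in> S" "c \<in> S" "a \<noteq> b" "b \<noteq> c"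
  shows "p \<circ> transpose a b \<circ> transpose b c permutes S"
    and "sign (p \<circ> transpose a b \<circ> transpose b c) = (sign p :: int)"
proof -
  have pp: "permutation p" using p fS
    by (meson permutation_permutes)
  show "p \<circ> transpose a b \<circ> transpose b c permutes S"
    using assms by (intro permutes_compose permutes_swap_id) auto
  have "sign (p \<circ> transpose a b \<circ> transpose b c) = (sign p :: int) * sign (transpose a b) * sign (transpose b c)"
    by (simp add: sign_compose pp permutation_compose permutation_swap_id)
  thus "sign (p \<circ> transpose a b \<circ> transpose b c) = (sign p :: int)"
    using assms by (simp add: sign_swap_id)
qed

theorem lemma3p8:
  fixes k :: nat
  assumes "k \<ge> 1"
  shows "hbasis id \<notin> Psub k"
proof
  assume "hbasis id \<in> Psub k"
  moreover have "\<And>g. g \<in> antisym_gens k \<union> jacobi_gens k \<Longrightarrow> phi k g mod 3 = 0"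
  proof -
    fix g assume "g \<in> antisym_gens k \<union> jacobi_gens k"
    then consider (A) p \<sigma> where "p permutes {1..2*k+3}" "\<sigma> permutes {1..2*k+3}"
        "g = (\<lambda>x. hbasis p x - sign \<sigma> * hbasis (p \<circ> \<sigma>) x)"
      | (J) p where "p permutes {1..2*k+3}" "g = (\<lambda>x. hbasis p x
      + hbasis (p(2*k+1 := p (2*k+2), 2*k+2 := p (2*k+3), 2*k+3 := p (2*k+1))) x
      + hbasis (p(2*k+1 := p (2*k+3), 2*k+2 := p (2*k+1), 2*k+3 := p (2*k+2))) x)"
      unfolding antisym_gens_def jacobi_gens_def by blast
    then show "phi k g mod 3 = 0"
    proof cases
      case A
      have pp: "permutation p" "permutation \<sigma>" using A
        by (meson finite_atLeastAtMost permutation_permutes)+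
      have ps: "p \<circ> \<sigma> permutes {1..2*k+3}" using A by (intro permutes_compose)
      have "phi k g = phi k (hbasis p) - sign \<sigma> * phi k (hbasis (p \<circ> \<sigma>))"
        unfolding A(3) phi_def by (simp add: algebra_simps sum_subtractf sum_distrib_left)
      also have "\<dots> = 0" using A ps pp
        by (simp add: phi_hbasis sign_compose mult_ac)
      finally show ?thesis by simp
    next
      case J
      define a where "a = 2*k+1"
      define b where "b = 2*k+2"
      define c where "c = 2*k+3"
      have e1: "p(2*k+1 := p (2*k+2), 2*k+2 := p (2*k+3), 2*k+3 := p (2*k+1))
          = p \<circ> transpose a b \<circ> transpose b c"
        by (rule ext) (auto simp: a_def b_def c_def transpose_def)
      have e2: "p(2*k+1 := p (2*k+3), 2*k+2 := p (2*k+1), 2*k+3 := p (2*k+2))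
          = p \<circ> transpose a c \<circ> transpose c b"
        by (rule ext) (auto simp: a_def b_def c_def transpose_def)
      have m: "a \<in> {1..2*k+3}" "b \<in> {1..2*k+3}" "c \<in> {1..2*k+3}" "a \<noteq> b" "b \<noteq> c" "a \<noteq> c"
        by (auto simp: a_def b_def c_def)
      note c1 = perm_cyc[OF J(1) finite_atLeastAtMost m(1) m(2) m(3) m(4) m(5)]
      note c2 = perm_cyc[OF J(1) finite_atLeastAtMost m(1) m(3) m(2) m(6) m(5)[symmetric]]
      have "phi k g = phi k (hbasis p) + phi k (hbasis (p \<circ> transpose a b \<circ> transpose b c))
          + phi k (hbasis (p \<circ> transpose a c \<circ> transpose c b))"
        unfolding J(2) e1 e2 phi_def by (simp add: algebra_simps sum.distrib)
      also have "\<dots> = 3 * sign p"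
        using c1 c2 J(1) by (simp add: phi_hbasis)
      finally show ?thesis by simp
    qed
  qed
  ultimately have "phi k (hbasis id) mod 3 = 0" unfolding Psub_def by (rule phi_gen)
  moreover have "phi k (hbasis id) = 1" by (simp add: phi_hbasis permutes_id)
  ultimately show False by simp
qed

end
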